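(* Let $n\ge0$ be an integer and $S_n\in\mathbb R$, and define \[ M_n=\frac{1}{\sqrt{2\pi}}\int_{-\infty}^{\infty}\Big[\exp\Big(\eta S_n-\tfrac12\eta^2 n\Big)-1\Big]e^{-\eta^2/2}\,\frac{d\eta}{|\eta|}. \] Then \[ M_n=I\Big(\frac{S_n}{\sqrt{n+1}}\Big)-\frac{1}{\sqrt{2\pi}}\ln(1+n), \] where $I(x)=\int_0^x e^{u^2/2}\operatorname{erf}(u/\sqrt2)\,du$. Moreover $I$ is nonnegative, and consequently $M_n\ge-\frac{1}{\sqrt{2\pi}}\ln(1+n)$.
   Context: $\operatorname{erf}(z)=\frac{2}{\sqrt\pi}\int_0^z e^{-t^2}dt$. In the paper $S_n=\sum_{i\le n}(X_i-\mu)$ is the centered partial sum of a sequence of sub-Gaussian random variables; the identity holds pointwise for each value of $S_n$. *)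

theory Defs
  imports "HOL-Analysis.Analysis"
begin

text \<open>Error function; signed interval integral, so erf is odd.\<close>
definition erf :: "real \<Rightarrow> real" where
  "erf z = 2 / sqrt pi * (LBINT t=0..z. exp (- (t^2)))"

definition I_fun :: "real \<Rightarrow> real" where
  "I_fun x = (LBINT u=0..x. exp (u^2 / 2) * erf (u / sqrt 2))"

text \<open>The integrand defining M_n (value at eta = 0 is irrelevant: null set).\<close>
definition M_integrand :: "nat \<Rightarrow> real \<Rightarrow> real \<Rightarrow> real" where
  "M_integrand n S \<eta> = (exp (\<eta> * S - \<eta>^2 * real n / 2) - 1) * exp (- (\<eta>^2) / 2) / \<bar>\<eta>\<bar>"

definition M_val :: "nat \<Rightarrow> real \<Rightarrow> real" where
  "M_val n S = 1 / sqrt (2 * pi) * (LBINT \<eta>. M_integrand n S \<eta>)"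

end

theory Submission
  imports Defs "HOL-Probability.Distributions"
begin

lemma FTC_deriv:
  fixes f :: "real \<Rightarrow> real" and c x :: real
  assumes "continuous_on UNIV f"
  shows "((\<lambda>u. LBINT y=c..u. f y) has_real_derivative f x) (at x)"
proof -
  have "((\<lambda>u. LBINT y=c..u. f y) has_vector_derivative f x) (at x within {min c x - 1..max c x + 1})"
    by (rule interval_integral_FTC2) (auto intro: continuous_on_subset[OF assms])
  moreover have "at x within {min c x - 1..max c x + 1} = at x"
    by (rule at_within_Icc_at) auto
  ultimately show ?thesis
    by (simp add: has_real_derivative_iff_has_vector_derivative)
qed

lemma FTC_deriv0:
  fixes f :: "real \<Rightarrow> real" and x :: real
  assumes "continuous_on UNIV f"
  shows "((\<lambda>u. LBINT y=0..u. f y) has_real_derivative f x) (at x)"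
  using FTC_deriv[OF assms, of 0 x] by (simp add: zero_ereal_def)

lemma LBINT_00: "(LBINT y=0..ereal 0. f y) = 0"
  by (simp add: zero_ereal_def[symmetric] interval_lebesgue_integral_def einterval_same set_lebesgue_integral_def)

lemma cont_exp_sq: "continuous_on UNIV (\<lambda>t::real. exp (- (t^2)))"
  by (intro continuous_intros)

lemma erf_deriv: "(erf has_real_derivative (2 / sqrt pi * exp (- (x^2)))) (at x)"
  unfolding erf_def[abs_def]
  by (intro DERIV_cmult FTC_deriv0 cont_exp_sq)

lemma erf_cont: "continuous_on UNIV erf"
  using erf_deriv by (meson DERIV_isCont continuous_at_imp_continuous_on)

lemma erf_0: "erf 0 = 0"
  by (simp add: erf_def LBINT_00)

lemma erf_odd: "erf (- x) = - erf x"
proof -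
  have "\<forall>x. ((\<lambda>x. erf (- x) + erf x) has_real_derivative 0) (at x)"
  proof
    fix x :: real
    have "((\<lambda>x. erf (- x) + erf x) has_real_derivative
        (2 / sqrt pi * exp (- ((-x)^2))) * (-1) + 2 / sqrt pi * exp (- (x^2))) (at x)"
      by (intro derivative_intros DERIV_chain2[OF erf_deriv] erf_deriv)
    then show "((\<lambda>x. erf (- x) + erf x) has_real_derivative 0) (at x)" by simp
  qed
  then have "erf (- x) + erf x = erf (- 0) + erf 0"
    by (rule DERIV_isconst_all)
  then show ?thesis by (simp add: erf_0)
qed

lemma erf_nonneg: "0 \<le> x \<Longrightarrow> 0 \<le> erf x"
proof -
  assume x: "0 \<le> x"
  have "erf 0 \<le> erf x"
  proof (rule DERIV_nonneg_imp_nondecreasing[OF x])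
    fix y :: real
    show "\<exists>D. DERIV erf y :> D \<and> D \<ge> 0"
      using erf_deriv by (intro exI conjI) auto
  qed
  then show ?thesis by (simp add: erf_0)
qed

lemma erf_nonpos: "x \<le> 0 \<Longrightarrow> erf x \<le> 0"
  using erf_nonneg[of "-x"] erf_odd[of x] by simp

lemma I_deriv: "(I_fun has_real_derivative (exp (x^2 / 2) * erf (x / sqrt 2))) (at x)"
  unfolding I_fun_def[abs_def]
  by (intro FTC_deriv0 continuous_intros continuous_on_compose2[OF erf_cont]) auto

lemma I_0: "I_fun 0 = 0"
  by (simp add: I_fun_def LBINT_00)

lemma I_nonneg: "0 \<le> I_fun x"
proof (cases "0 \<le> x")
  case True
  have "I_fun 0 \<le> I_fun x"
  proof (rule DERIV_nonneg_imp_nondecreasing[OF True])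
    fix y :: real assume "0 \<le> y"
    then have "erf (y / sqrt 2) \<ge> 0" by (intro erf_nonneg) simp
    then show "\<exists>D. DERIV I_fun y :> D \<and> D \<ge> 0"
      using I_deriv[of y] by (intro exI[of _ "exp (y^2/2) * erf (y / sqrt 2)"]) auto
  qed
  then show ?thesis by (simp add: I_0)
next
  case False
  have "I_fun x \<ge> I_fun 0"
  proof (rule DERIV_nonpos_imp_nonincreasing[of x 0 I_fun])
    show "x \<le> 0" using False by simp
    fix y :: real assume "x \<le> y" "y \<le> 0"
    then have "erf (y / sqrt 2) \<le> 0" by (intro erf_nonpos) (simp add: divide_nonpos_pos)
    then show "\<exists>D. DERIV I_fun y :> D \<and> D \<le> 0"
      using I_deriv[of y] by (intro exI[of _ "exp (y^2/2) * erf (y / sqrt 2)"]) (auto simp: mult_nonneg_nonpos)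
  qed
  then show ?thesis using I_0 by simp
qed

lemma fubini_Icc:
  fixes h :: "real \<Rightarrow> real \<Rightarrow> real" and g :: "real \<Rightarrow> real" and p q :: real
  assumes pq: "p \<le> q"
  and meas: "(\<lambda>z. h (fst z) (snd z)) \<in> borel_measurable (lborel \<Otimes>\<^sub>M lborel)"
  and cont: "\<And>\<eta> s. isCont (h \<eta>) s"
  and bound: "\<And>\<eta> s. p \<le> s \<Longrightarrow> s \<le> q \<Longrightarrow> \<bar>h \<eta> s\<bar> \<le> g \<eta>"
  and gint: "integrable lborel g"
  shows "integrable lborel (\<lambda>\<eta>. LBINT s=p..q. h \<eta> s) \<and>
    (\<integral>\<eta>. (LBINT s=p..q. h \<eta> s) \<partial>lborel) = (LBINT s=p..q. (\<integral>\<eta>. h \<eta> s \<partial>lborel))"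
proof -
  define F where "F = (\<lambda>x y. indicator {p..q} y * h x y)"
  have Fm[measurable]: "(\<lambda>z. F (fst z) (snd z)) \<in> borel_measurable (lborel \<Otimes>\<^sub>M lborel)"
    unfolding F_def by (intro borel_measurable_times meas) measurable
  have Fm': "case_prod F \<in> borel_measurable (lborel \<Otimes>\<^sub>M lborel)"
    using Fm by (simp add: case_prod_beta')
  have int2: "integrable lborel (\<lambda>y. F x y)" for x
    using borel_integrable_atLeastAtMost[of p q "h x"] cont
    by (simp add: F_def mult.commute)
  have gi: "(\<integral>y. indicator {p..q} y * g x \<partial>lborel) = g x * (q - p)" for x
    using pq by simp
  have "integrable lborel (\<lambda>x. \<integral>y. norm (F x y) \<partial>lborel)"
  proof (rule Bochner_Integration.integrable_bound[where f="\<lambda>x. (q - p) * g x"])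
    show "integrable lborel (\<lambda>x. (q - p) * g x)" using gint by simp
    show "(\<lambda>x. \<integral>y. norm (F x y) \<partial>lborel) \<in> borel_measurable lborel"
      using Fm by measurable
    show "AE x in lborel. norm (\<integral>y. norm (F x y) \<partial>lborel) \<le> norm ((q - p) * g x)"
    proof (intro AE_I2)
      fix x
      have "(\<integral>y. norm (F x y) \<partial>lborel) \<le> (\<integral>y. indicator {p..q} y * g x \<partial>lborel)"
      proof (rule integral_mono)
        show "integrable lborel (\<lambda>y. norm (F x y))" using int2 by (rule integrable_norm)
        show "integrable lborel (\<lambda>y. indicator {p..q} y * g x)"
          using pq by (simp add: integrable_indicator_iff emeasure_lborel_Icc)
        show "norm (F x y) \<le> indicator {p..q} y * g x" for y
          using bound[of y x] by (auto simp: F_def indicator_def abs_mult)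
      qed
      also have "\<dots> = (q - p) * g x" using gi by simp
      finally have "(\<integral>y. norm (F x y) \<partial>lborel) \<le> (q - p) * g x" .
      moreover have "0 \<le> (\<integral>y. norm (F x y) \<partial>lborel)" by simp
      ultimately show "norm (\<integral>y. norm (F x y) \<partial>lborel) \<le> norm ((q - p) * g x)" by simp
    qed
  qed
  then have "integrable (lborel \<Otimes>\<^sub>M lborel) (case_prod F)"
    using Fm' int2 by (intro lborel_pair.Fubini_integrable) auto
  note I = lborel_pair.integrable_fst[OF this] lborel_pair.Fubini_integral[OF this]
  have e1: "(LBINT s=p..q. h x s) = (\<integral>y. F x y \<partial>lborel)" for x
    using pq by (simp add: interval_integral_Icc set_lebesgue_integral_def F_def)
  have e2: "(LBINT s=p..q. (\<integral>\<eta>. h \<eta> s \<partial>lborel)) = (\<integral>y. (\<integral>x. F x y \<partial>lborel) \<partial>lborel)"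
    using pq by (simp add: interval_integral_Icc set_lebesgue_integral_def F_def)
  show ?thesis using I by (simp add: e1 e2)
qed

lemma g1: "integrable lborel (\<lambda>x::real. exp (- (x^2) / 2))"
proof -
  have "integrable lborel (\<lambda>x. sqrt (2 * pi) * std_normal_density x)" by simp
  moreover have "(\<lambda>x. sqrt (2 * pi) * std_normal_density x) = (\<lambda>x::real. exp (- (x^2) / 2))"
    by (auto simp: std_normal_density_def)
  ultimately show ?thesis by metis
qed

lemma g2: "integrable lborel (\<lambda>x::real. \<bar>x\<bar> * exp (- (x^2) / 2))"
proof -
  have "integrable lborel (\<lambda>x. sqrt (2 * pi) * (std_normal_density x * \<bar>x\<bar> ^ 1))"
    using integrable_std_normal_moment_abs[of 1] by (rule integrable_mult_right)
  moreover have "(\<lambda>x. sqrt (2 * pi) * (std_normal_density x * \<bar>x\<bar> ^ 1)) = (\<lambda>x::real. \<bar>x\<bar> * exp (- (x^2) / 2))"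
    by (auto simp: std_normal_density_def)
  ultimately show ?thesis by metis
qed

lemma g3: "(\<integral>x. \<bar>x\<bar> * exp (- (x^2) / 2) \<partial>lborel) = (2::real)"
proof -
  have "(\<lambda>x::real. \<bar>x\<bar> * exp (- (x^2) / 2)) = (\<lambda>x. sqrt (2 * pi) * (std_normal_density x * \<bar>x\<bar> ^ (2 * 0 + 1)))"
    by (auto simp: std_normal_density_def)
  then have "(\<integral>x. \<bar>x\<bar> * exp (- (x^2) / 2) \<partial>lborel) = sqrt (2 * pi) * sqrt (2 / pi)"
    using integral_std_normal_moment_abs_odd[of 0] by simp
  also have "\<dots> = sqrt 4" by (subst real_sqrt_mult[symmetric]) simp
  also have "\<dots> = 2" by simp
  finally show ?thesis .
qed

lemma gauss_integrable: "0 < c \<Longrightarrow> integrable lborel (\<lambda>x::real. exp (- (c * x^2)))"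
proof -
  assume c: "0 < c"
  have "integrable lborel (\<lambda>x. (\<lambda>y::real. exp (- (y^2) / 2)) (0 + sqrt (2 * c) * x))"
    using c g1 by (subst lborel_integrable_real_affine_iff) auto
  moreover have "(\<lambda>x. (\<lambda>y::real. exp (- (y^2) / 2)) (0 + sqrt (2 * c) * x)) = (\<lambda>x. exp (- (c * x^2)))"
    using c by (auto simp: power_mult_distrib)
  ultimately show ?thesis by metis
qed

lemma gauss_abs_integrable: "0 < b \<Longrightarrow> integrable lborel (\<lambda>x::real. \<bar>x\<bar> * exp (- (b * x^2) / 2))"
proof -
  assume b: "0 < b"
  have "integrable lborel (\<lambda>x. (\<lambda>y::real. \<bar>y\<bar> * exp (- (y^2) / 2)) (0 + sqrt b * x))"
    using b g2 by (subst lborel_integrable_real_affine_iff) auto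
  then have "integrable lborel (\<lambda>x. (1 / sqrt b) * ((\<lambda>y::real. \<bar>y\<bar> * exp (- (y^2) / 2)) (0 + sqrt b * x)))"
    by simp
  moreover have "(\<lambda>x. (1 / sqrt b) * ((\<lambda>y::real. \<bar>y\<bar> * exp (- (y^2) / 2)) (0 + sqrt b * x))) = (\<lambda>x. \<bar>x\<bar> * exp (- (b * x^2) / 2))"
    using b by (auto simp: power_mult_distrib abs_mult)
  ultimately show ?thesis by metis
qed

lemma gauss_abs: "0 < (b::real) \<Longrightarrow> (\<integral>x. \<bar>x\<bar> * exp (- (b * x^2) / 2) \<partial>lborel) = 2 / b"
proof -
  assume b: "0 < b"
  have "(2::real) = (\<integral>x. \<bar>x\<bar> * exp (- (x^2) / 2) \<partial>lborel)" using g3 by simp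
  also have "\<dots> = \<bar>sqrt b\<bar> *\<^sub>R (\<integral>x. (\<lambda>y::real. \<bar>y\<bar> * exp (- (y^2) / 2)) (0 + sqrt b * x) \<partial>lborel)"
    using b by (intro lborel_integral_real_affine) auto
  also have "(\<lambda>x. (\<lambda>y::real. \<bar>y\<bar> * exp (- (y^2) / 2)) (0 + sqrt b * x)) = (\<lambda>x. sqrt b * (\<bar>x\<bar> * exp (- (b * x^2) / 2)))"
    using b by (auto simp: power_mult_distrib abs_mult)
  finally have "2 = sqrt b * (\<integral>x. sqrt b * (\<bar>x\<bar> * exp (- (b * x^2) / 2)) \<partial>lborel)"
    using b by simp
  also have "(\<integral>x. sqrt b * (\<bar>x\<bar> * exp (- (b * x^2) / 2)) \<partial>lborel) = sqrt b * (\<integral>x. \<bar>x\<bar> * exp (- (b * x^2) / 2) \<partial>lborel)"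
    by (rule integral_mult_right_zero)
  finally have "2 = b * (\<integral>x. \<bar>x\<bar> * exp (- (b * x^2) / 2) \<partial>lborel)"
    using b by (simp add: mult.assoc[symmetric])
  then show ?thesis using b by (simp add: field_simps)
qed

lemma gauss_e_integrable: "0 < a \<Longrightarrow> integrable lborel (\<lambda>w::real. exp (- (a * w^2) / 2))"
proof -
  assume a: "0 < a"
  have "integrable lborel (\<lambda>x::real. exp (- ((a/2) * x^2)))" using a by (intro gauss_integrable) simp
  moreover have "(\<lambda>x::real. exp (- ((a/2) * x^2))) = (\<lambda>w::real. exp (- (a * w^2) / 2))" by auto
  ultimately show ?thesis by metis
qed

lemma H_deriv:
  fixes a z :: real
  assumes a: "0 < a"
  shows "((\<lambda>z. sqrt pi / (2 * sqrt (a/2)) * erf (z * sqrt (a/2))) has_real_derivative exp (- (a * z^2) / 2)) (at z)"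
proof -
  have "((\<lambda>z. sqrt pi / (2 * sqrt (a/2)) * erf (z * sqrt (a/2))) has_real_derivative
      sqrt pi / (2 * sqrt (a/2)) * ((2 / sqrt pi * exp (- ((z * sqrt (a/2))^2))) * (1 * sqrt (a/2)))) (at z)"
    by (intro DERIV_cmult DERIV_chain2[OF erf_deriv] DERIV_cmult_right DERIV_ident)
  moreover have "sqrt pi / (2 * sqrt (a/2)) * ((2 / sqrt pi * exp (- ((z * sqrt (a/2))^2))) * (1 * sqrt (a/2)))
      = exp (- (a * z^2) / 2)"
    using a by (simp add: power_mult_distrib)
  ultimately show ?thesis by simp
qed

lemma gauss_interval:
  fixes a c :: real
  assumes a: "0 < a"
  shows "(LBINT w=ereal (-c)..ereal 0. exp (- (a * w^2) / 2)) = sqrt pi / (2 * sqrt (a/2)) * erf (c * sqrt (a/2))"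
proof -
  define H where "H = (\<lambda>z. sqrt pi / (2 * sqrt (a/2)) * erf (z * sqrt (a/2)))"
  have "(LBINT w=(-c)..(0::real). exp (- (a * w^2) / 2)) = H 0 - H (-c)"
  proof (rule interval_integral_FTC_finite)
    show "continuous_on {min (- c) 0..max (- c) 0} (\<lambda>w. exp (- (a * w\<^sup>2) / 2))"
      by (intro continuous_intros) auto
    fix x :: real
    show "(H has_vector_derivative exp (- (a * x\<^sup>2) / 2)) (at x within {min (- c) 0..max (- c) 0})"
      using H_deriv[OF a, of x] unfolding H_def
      by (simp add: has_real_derivative_iff_has_vector_derivative[symmetric] has_field_derivative_at_within)
  qed
  also have "H 0 - H (-c) = H c" unfolding H_def by (simp add: erf_0 erf_odd)
  finally show ?thesis by (simp add: H_def)
qed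

lemma sgn_shift_int:
  fixes a c :: real
  assumes a: "0 < a"
  shows "(\<integral>w. sgn (c + w) * exp (- (a * w^2) / 2) \<partial>lborel)
    = 2 * (LBINT w=ereal (-c)..ereal 0. exp (- (a * w^2) / 2))"
proof -
  define e where "e = (\<lambda>w::real. exp (- (a * w^2) / 2))"
  have em[measurable]: "e \<in> borel_measurable borel" unfolding e_def by measurable
  have ei: "integrable lborel e" unfolding e_def using gauss_e_integrable[OF a] .
  have si: "integrable lborel (\<lambda>w. sgn w * e w)"
  proof (rule Bochner_Integration.integrable_bound[where f=e])
    show "integrable lborel e" by (rule ei)
    show "(\<lambda>w. sgn w * e w) \<in> borel_measurable lborel" by measurable
    show "AE x in lborel. norm (sgn x * e x) \<le> norm (e x)"
      by (intro AE_I2) (auto simp: abs_mult sgn_if)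
  qed
  define d where "d = (\<lambda>w::real. indicator {-c<..<0} w - indicator {0<..<-c} w :: real)"
  have dm[measurable]: "d \<in> borel_measurable borel" unfolding d_def by measurable
  have ii: "integrable lborel (\<lambda>w. d w * e w)"
  proof (rule Bochner_Integration.integrable_bound[where f=e])
    show "integrable lborel e" by (rule ei)
    show "(\<lambda>w. d w * e w) \<in> borel_measurable lborel" by measurable
    show "AE x in lborel. norm (d x * e x) \<le> norm (e x)"
      by (intro AE_I2) (auto simp: abs_mult d_def indicator_def e_def)
  qed
  have ae: "AE w in lborel. sgn (c + w) * e w = sgn w * e w + 2 * (d w * e w)"
    using AE_lborel_singleton[of 0] AE_lborel_singleton[of "-c"]
  proof eventually_elim
    case (elim w)
    then show ?case
      by (cases "c \<ge> 0") (auto simp: d_def indicator_def sgn_if algebra_simps)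
  qed
  have "(\<integral>w. sgn (c + w) * e w \<partial>lborel) = (\<integral>w. sgn w * e w + 2 * (d w * e w) \<partial>lborel)"
    by (rule integral_cong_AE) (use ae in auto)
  also have "\<dots> = (\<integral>w. sgn w * e w \<partial>lborel) + 2 * (\<integral>w. d w * e w \<partial>lborel)"
    using si ii by simp
  also have "(\<integral>w. sgn w * e w \<partial>lborel) = 0"
  proof -
    have "(\<integral>w. sgn w * e w \<partial>lborel) = \<bar>-1\<bar> *\<^sub>R (\<integral>w. (\<lambda>w. sgn w * e w) (0 + (-1) * w) \<partial>lborel)"
      by (rule lborel_integral_real_affine) simp
    also have "\<dots> = - (\<integral>w. sgn w * e w \<partial>lborel)"
      by (simp add: e_def sgn_minus)
    finally show ?thesis by simp
  qed
  also have "(\<integral>w. d w * e w \<partial>lborel) = (LBINT w=ereal (-c)..ereal 0. e w)"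
  proof (cases "c \<ge> 0")
    case True
    then show ?thesis
      by (simp add: interval_lebesgue_integral_def set_lebesgue_integral_def d_def)
  next
    case False
    then show ?thesis
      by (simp add: interval_lebesgue_integral_def set_lebesgue_integral_def d_def)
  qed
  finally show ?thesis by (simp add: e_def)
qed

lemma K_val:
  fixes a s :: real
  assumes a: "0 < a"
  shows "(\<integral>\<eta>. sgn \<eta> * exp (\<eta> * s - a * \<eta>^2 / 2) \<partial>lborel)
    = sqrt (2 * pi) / sqrt a * exp (s^2 / (2 * a)) * erf (s / (sqrt a * sqrt 2))"
proof -
  define e where "e = (\<lambda>w::real. exp (- (a * w^2) / 2))"
  have pw: "sgn \<eta> * exp (\<eta> * s - a * \<eta>^2 / 2) = exp (s^2 / (2 * a)) * (sgn \<eta> * e (\<eta> - s / a))" for \<eta>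
  proof -
    have eq: "\<eta> * s - a * \<eta>^2 / 2 = s^2 / (2 * a) + (- (a * (\<eta> - s / a)^2) / 2)"
      using a by (simp add: field_simps power2_eq_square)
    have "exp (\<eta> * s - a * \<eta>^2 / 2) = exp (s^2 / (2 * a)) * e (\<eta> - s / a)"
      unfolding e_def by (simp only: eq exp_add[symmetric])
    then show ?thesis by simp
  qed
  have "(\<integral>\<eta>. sgn \<eta> * exp (\<eta> * s - a * \<eta>^2 / 2) \<partial>lborel)
      = exp (s^2 / (2 * a)) * (\<integral>\<eta>. sgn \<eta> * e (\<eta> - s / a) \<partial>lborel)"
    by (simp add: pw)
  also have "(\<integral>\<eta>. sgn \<eta> * e (\<eta> - s / a) \<partial>lborel) = \<bar>1\<bar> *\<^sub>R (\<integral>w. (\<lambda>\<eta>. sgn \<eta> * e (\<eta> - s / a)) (s / a + 1 * w) \<partial>lborel)"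
    by (rule lborel_integral_real_affine) simp
  also have "\<dots> = (\<integral>w. sgn (s / a + w) * exp (- (a * w^2) / 2) \<partial>lborel)"
    by (simp add: e_def)
  also have "\<dots> = 2 * (sqrt pi / (2 * sqrt (a/2)) * erf ((s / a) * sqrt (a/2)))"
    using sgn_shift_int[OF a, of "s / a"] gauss_interval[OF a, of "s / a"] by simp
  also have "sqrt pi / (2 * sqrt (a/2)) = sqrt (2 * pi) / sqrt a / 2"
    using a by (simp add: real_sqrt_divide real_sqrt_mult field_simps)
  also have "(s / a) * sqrt (a/2) = s / (sqrt a * sqrt 2)"
  proof -
    have "a = sqrt a * sqrt a" using a by simp
    then have "(s / a) * sqrt (a/2) = s / (sqrt a * sqrt a) * (sqrt a / sqrt 2)"
      by (simp add: real_sqrt_divide)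
    also have "\<dots> = s / (sqrt a * sqrt 2)" using a by (simp add: field_simps)
    finally show ?thesis .
  qed
  finally show ?thesis by simp
qed

lemma PA:
  fixes a S \<eta> :: real
  shows "(LBINT s=ereal 0..ereal S. sgn \<eta> * exp (\<eta> * s - a * \<eta>^2 / 2))
    = (exp (\<eta> * S - a * \<eta>^2 / 2) - exp (- (a * \<eta>^2 / 2))) / \<bar>\<eta>\<bar>"
proof (cases "\<eta> = 0")
  case True
  then show ?thesis by simp
next
  case False
  define F where "F = (\<lambda>s. sgn \<eta> * exp (\<eta> * s - a * \<eta>^2 / 2) / \<eta>)"
  have "(LBINT s=ereal 0..ereal S. sgn \<eta> * exp (\<eta> * s - a * \<eta>^2 / 2)) = F S - F 0"
  proof (rule interval_integral_FTC_finite)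
    show "continuous_on {min 0 S..max 0 S} (\<lambda>s. sgn \<eta> * exp (\<eta> * s - a * \<eta>^2 / 2))"
      by (intro continuous_intros)
    fix x :: real
    have "(F has_real_derivative sgn \<eta> * (exp (\<eta> * x - a * \<eta>^2 / 2) * (\<eta> * 1 - 0)) / \<eta>) (at x)"
      unfolding F_def using False by (intro derivative_eq_intros) auto
    then have "(F has_real_derivative sgn \<eta> * exp (\<eta> * x - a * \<eta>^2 / 2)) (at x)"
      using False by simp
    then show "(F has_vector_derivative sgn \<eta> * exp (\<eta> * x - a * \<eta>^2 / 2)) (at x within {min 0 S..max 0 S})"
      by (simp add: has_real_derivative_iff_has_vector_derivative[symmetric] has_field_derivative_at_within)
  qed
  also have "F S - F 0 = (exp (\<eta> * S - a * \<eta>^2 / 2) - exp (- (a * \<eta>^2 / 2))) / \<bar>\<eta>\<bar>"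
    unfolding F_def using False
    by (cases "\<eta> > 0") (auto simp: field_simps sgn_if)
  finally show ?thesis .
qed

lemma PB:
  fixes a \<eta> :: real
  shows "(LBINT b=ereal 1..ereal a. - (\<bar>\<eta>\<bar> * exp (- (b * \<eta>^2) / 2) / 2))
    = (exp (- (a * \<eta>^2) / 2) - exp (- (\<eta>^2) / 2)) / \<bar>\<eta>\<bar>"
proof (cases "\<eta> = 0")
  case True
  then show ?thesis by simp
next
  case False
  define c where "c = - (\<eta>^2) / 2"
  have ce: "- (b * \<eta>^2) / 2 = b * c" for b unfolding c_def by simp
  define F where "F = (\<lambda>b. exp (b * c) / \<bar>\<eta>\<bar>)"
  have "(LBINT b=ereal 1..ereal a. - (\<bar>\<eta>\<bar> * exp (- (b * \<eta>^2) / 2) / 2)) = F a - F 1"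
  proof (rule interval_integral_FTC_finite)
    show "continuous_on {min 1 a..max 1 a} (\<lambda>b. - (\<bar>\<eta>\<bar> * exp (- (b * \<eta>^2) / 2) / 2))"
      by (intro continuous_intros) simp_all
    fix x :: real
    have "(F has_real_derivative exp (x * c) * (1 * c) / \<bar>\<eta>\<bar>) (at x)"
      unfolding F_def by (intro DERIV_cdivide DERIV_fun_exp DERIV_cmult_right DERIV_ident)
    moreover have "exp (x * c) * (1 * c) / \<bar>\<eta>\<bar> = - (\<bar>\<eta>\<bar> * exp (- (x * \<eta>^2) / 2) / 2)"
    proof -
      have h: "\<eta>^2 = \<bar>\<eta>\<bar> * \<bar>\<eta>\<bar>" by (simp add: power2_eq_square)
      have nz: "\<bar>\<eta>\<bar> \<noteq> 0" using False by simp
      have "exp (x * c) * (1 * c) / \<bar>\<eta>\<bar> = - (exp (x * c) * (\<bar>\<eta>\<bar> * \<bar>\<eta>\<bar>) / (2 * \<bar>\<eta>\<bar>))"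
        unfolding c_def h by simp
      also have "\<dots> = - (\<bar>\<eta>\<bar> * exp (x * c) / 2)"
      proof -
        have gen: "\<And>t X::real. t \<noteq> 0 \<Longrightarrow> X * (t * t) / (2 * t) = t * X / 2"
          by (simp add: field_simps)
        show ?thesis by (simp only: gen[OF nz])
      qed
      finally show ?thesis by (simp only: ce)
    qed
    ultimately have "(F has_real_derivative - (\<bar>\<eta>\<bar> * exp (- (x * \<eta>^2) / 2) / 2)) (at x)"
      by simp
    then show "(F has_vector_derivative - (\<bar>\<eta>\<bar> * exp (- (x * \<eta>^2) / 2) / 2)) (at x within {min 1 a..max 1 a})"
      by (simp add: has_real_derivative_iff_has_vector_derivative[symmetric] has_field_derivative_at_within)
  qed
  also have "F a - F 1 = (exp (- (a * \<eta>^2) / 2) - exp (- (\<eta>^2) / 2)) / \<bar>\<eta>\<bar>"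
    unfolding F_def c_def by (simp add: diff_divide_distrib)
  finally show ?thesis .
qed

lemma Psum:
  fixes n :: nat and S \<eta> :: real
  defines "a \<equiv> real n + 1"
  shows "M_integrand n S \<eta> = (exp (\<eta> * S - a * \<eta>^2 / 2) - exp (- (a * \<eta>^2 / 2))) / \<bar>\<eta>\<bar>
     + (exp (- (a * \<eta>^2) / 2) - exp (- (\<eta>^2) / 2)) / \<bar>\<eta>\<bar>"
proof -
  have e1: "exp (\<eta> * S - \<eta>^2 * real n / 2) * exp (- (\<eta>^2) / 2) = exp (\<eta> * S - a * \<eta>^2 / 2)"
    unfolding a_def by (simp add: exp_add[symmetric] field_simps)
  have "M_integrand n S \<eta> = (exp (\<eta> * S - a * \<eta>^2 / 2) - exp (- (\<eta>^2) / 2)) / \<bar>\<eta>\<bar>"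
    unfolding M_integrand_def by (simp only: left_diff_distrib e1 mult_1)
  moreover have "exp (- (a * \<eta>^2 / 2)) = exp (- (a * \<eta>^2) / 2)" by simp
  ultimately show ?thesis by (simp add: diff_divide_distrib)
qed

lemma partA:
  fixes a S :: real
  assumes a: "0 < a"
  shows "integrable lborel (\<lambda>\<eta>. LBINT s=ereal 0..ereal S. sgn \<eta> * exp (\<eta> * s - a * \<eta>^2 / 2)) \<and>
    (\<integral>\<eta>. (LBINT s=ereal 0..ereal S. sgn \<eta> * exp (\<eta> * s - a * \<eta>^2 / 2)) \<partial>lborel)
      = sqrt (2 * pi) * I_fun (S / sqrt a)"
proof -
  define h where "h = (\<lambda>\<eta> s. sgn \<eta> * exp (\<eta> * s - a * \<eta>^2 / 2))"
  define g where "g = (\<lambda>\<eta>::real. exp (\<bar>\<eta>\<bar> * \<bar>S\<bar> - a * \<eta>^2 / 2))"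
  have hm: "(\<lambda>z. h (fst z) (snd z)) \<in> borel_measurable (lborel \<Otimes>\<^sub>M lborel)"
    unfolding h_def by measurable
  have hc: "isCont (h \<eta>) s" for \<eta> s unfolding h_def by (intro continuous_intros)
  have hb: "\<bar>h \<eta> s\<bar> \<le> g \<eta>" if "\<bar>s\<bar> \<le> \<bar>S\<bar>" for \<eta> s
  proof -
    have "\<eta> * s \<le> \<bar>\<eta>\<bar> * \<bar>S\<bar>"
    proof -
      have "\<eta> * s \<le> \<bar>\<eta> * s\<bar>" by simp
      also have "\<dots> = \<bar>\<eta>\<bar> * \<bar>s\<bar>" by (simp add: abs_mult)
      also have "\<dots> \<le> \<bar>\<eta>\<bar> * \<bar>S\<bar>" using that by (simp add: mult_left_mono)
      finally show ?thesis .
    qed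
    then have "exp (\<eta> * s - a * \<eta>^2 / 2) \<le> g \<eta>" unfolding g_def by simp
    moreover have "\<bar>sgn \<eta>\<bar> \<le> 1" by (simp add: sgn_if)
    ultimately show ?thesis unfolding h_def
      by (simp add: abs_mult) (smt (verit, best) exp_gt_zero mult_left_le_one_le abs_ge_zero)
  qed
  have gi: "integrable lborel g"
  proof (rule Bochner_Integration.integrable_bound[where f="\<lambda>\<eta>. exp (S^2 / a) * exp (- ((a/4) * \<eta>^2))"])
    show "integrable lborel (\<lambda>\<eta>. exp (S^2 / a) * exp (- ((a/4) * \<eta>^2)))"
      using gauss_integrable[of "a/4"] a by simp
    show "g \<in> borel_measurable lborel" unfolding g_def by measurable
    show "AE x in lborel. norm (g x) \<le> norm (exp (S^2 / a) * exp (- ((a/4) * x^2)))"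
    proof (intro AE_I2)
      fix x :: real
      have "S^2 / a - (a/4) * x^2 - (\<bar>x\<bar> * \<bar>S\<bar> - a * x^2 / 2) = (\<bar>S\<bar> - a * \<bar>x\<bar> / 2)^2 / a"
        using a by (simp add: field_simps power2_eq_square)
      moreover have "(\<bar>S\<bar> - a * \<bar>x\<bar> / 2)^2 / a \<ge> 0" using a by simp
      ultimately have "\<bar>x\<bar> * \<bar>S\<bar> - a * x^2 / 2 \<le> S^2 / a + (- ((a/4) * x^2))" by linarith
      then have "g x \<le> exp (S^2 / a + (- ((a/4) * x^2)))" unfolding g_def by (simp only: exp_le_cancel_iff)
      also have "\<dots> = exp (S^2 / a) * exp (- ((a/4) * x^2))" by (rule exp_add)
      finally have "g x \<le> exp (S^2 / a) * exp (- ((a/4) * x^2))" .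
      moreover have "0 \<le> g x" unfolding g_def by simp
      ultimately show "norm (g x) \<le> norm (exp (S^2 / a) * exp (- ((a/4) * x^2)))"
        by simp
    qed
  qed
  define K where "K = (\<lambda>s. sqrt (2 * pi) / sqrt a * exp (s^2 / (2 * a)) * erf (s / (sqrt a * sqrt 2)))"
  have Kv: "(\<integral>\<eta>. h \<eta> s \<partial>lborel) = K s" for s
    unfolding h_def K_def using K_val[OF a] by simp
  have main: "integrable lborel (\<lambda>\<eta>. LBINT s=ereal 0..ereal S. h \<eta> s) \<and>
      (\<integral>\<eta>. (LBINT s=ereal 0..ereal S. h \<eta> s) \<partial>lborel) = (LBINT s=ereal 0..ereal S. K s)"
  proof (cases "0 \<le> S")
    case True
    have "integrable lborel (\<lambda>\<eta>. LBINT s=ereal 0..ereal S. h \<eta> s) \<and>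
      (\<integral>\<eta>. (LBINT s=ereal 0..ereal S. h \<eta> s) \<partial>lborel) = (LBINT s=ereal 0..ereal S. (\<integral>\<eta>. h \<eta> s \<partial>lborel))"
      using True by (intro fubini_Icc[OF True hm hc _ gi] hb) auto
    then show ?thesis by (simp add: Kv)
  next
    case False
    have "integrable lborel (\<lambda>\<eta>. LBINT s=ereal S..ereal 0. h \<eta> s) \<and>
      (\<integral>\<eta>. (LBINT s=ereal S..ereal 0. h \<eta> s) \<partial>lborel) = (LBINT s=ereal S..ereal 0. (\<integral>\<eta>. h \<eta> s \<partial>lborel))"
      using False by (intro fubini_Icc[OF _ hm hc _ gi] hb) auto
    then show ?thesis
      by (subst (1 2 3) interval_integral_endpoints_reverse) (simp add: Kv)
  qed
  have "(LBINT s=ereal 0..ereal S. K s) = sqrt (2 * pi) * I_fun (S / sqrt a) - sqrt (2 * pi) * I_fun (0 / sqrt a)"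
  proof (rule interval_integral_FTC_finite)
    show "continuous_on {min 0 S..max 0 S} K"
      unfolding K_def using a by (intro continuous_intros continuous_on_compose2[OF erf_cont]) auto
    fix x :: real
    have "((\<lambda>s. sqrt (2 * pi) * I_fun (s / sqrt a)) has_real_derivative
        sqrt (2 * pi) * ((exp ((x / sqrt a)^2 / 2) * erf ((x / sqrt a) / sqrt 2)) * (1 / sqrt a))) (at x)"
      by (intro DERIV_cmult DERIV_chain2[OF I_deriv] DERIV_cdivide DERIV_ident)
    moreover have "sqrt (2 * pi) * ((exp ((x / sqrt a)^2 / 2) * erf ((x / sqrt a) / sqrt 2)) * (1 / sqrt a)) = K x"
      unfolding K_def using a by (simp add: power_divide)
    ultimately show "((\<lambda>s. sqrt (2 * pi) * I_fun (s / sqrt a)) has_vector_derivative K x) (at x within {min 0 S..max 0 S})"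
      by (simp add: has_real_derivative_iff_has_vector_derivative[symmetric] has_field_derivative_at_within)
  qed
  then have "(LBINT s=ereal 0..ereal S. K s) = sqrt (2 * pi) * I_fun (S / sqrt a)"
    by (simp add: I_0)
  then show ?thesis using main unfolding h_def by simp
qed

lemma partB:
  fixes a :: real
  assumes a: "1 \<le> a"
  shows "integrable lborel (\<lambda>\<eta>. LBINT b=ereal 1..ereal a. - (\<bar>\<eta>\<bar> * exp (- (b * \<eta>^2) / 2) / 2)) \<and>
    (\<integral>\<eta>. (LBINT b=ereal 1..ereal a. - (\<bar>\<eta>\<bar> * exp (- (b * \<eta>^2) / 2) / 2)) \<partial>lborel) = - ln a"
proof -
  define h where "h = (\<lambda>\<eta> b::real. - (\<bar>\<eta>::real\<bar> * exp (- (b * \<eta>^2) / 2) / 2))"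
  define g where "g = (\<lambda>\<eta>::real. \<bar>\<eta>\<bar> * exp (- (\<eta>^2) / 2) / 2)"
  have hm: "(\<lambda>z. h (fst z) (snd z)) \<in> borel_measurable (lborel \<Otimes>\<^sub>M lborel)"
    unfolding h_def by measurable
  have hc: "isCont (h \<eta>) s" for \<eta> s unfolding h_def by (intro continuous_intros) simp_all
  have hb: "\<bar>h \<eta> b\<bar> \<le> g \<eta>" if "1 \<le> b" for \<eta> b
  proof -
    have "b * \<eta>^2 \<ge> 1 * \<eta>^2" using that by (intro mult_right_mono) auto
    then have "exp (- (b * \<eta>^2) / 2) \<le> exp (- (\<eta>^2) / 2)" by simp
    then show ?thesis unfolding h_def g_def
      by (simp add: abs_mult mult_left_mono)
  qed
  have gi: "integrable lborel g" unfolding g_def using g2 by simp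
  have main: "integrable lborel (\<lambda>\<eta>. LBINT b=ereal 1..ereal a. h \<eta> b) \<and>
      (\<integral>\<eta>. (LBINT b=ereal 1..ereal a. h \<eta> b) \<partial>lborel) = (LBINT b=ereal 1..ereal a. (\<integral>\<eta>. h \<eta> b \<partial>lborel))"
    by (intro fubini_Icc[OF a hm hc _ gi] hb)
  have "(LBINT b=ereal 1..ereal a. (\<integral>\<eta>. h \<eta> b \<partial>lborel)) = (LBINT b=ereal 1..ereal a. - (1 / b))"
  proof (rule interval_integral_cong)
    fix b assume "b \<in> einterval (min (ereal 1) (ereal a)) (max (ereal 1) (ereal a))"
    then have b: "0 < b" using a by (auto simp: einterval_def min_def max_def split: if_splits)
    have "(\<integral>\<eta>. h \<eta> b \<partial>lborel) = - ((\<integral>\<eta>. \<bar>\<eta>\<bar> * exp (- (b * \<eta>^2) / 2) \<partial>lborel) / 2)"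
      unfolding h_def by simp
    also have "\<dots> = - (1 / b)" using gauss_abs[OF b] by simp
    finally show "(\<integral>\<eta>. h \<eta> b \<partial>lborel) = - (1 / b)" .
  qed
  also have "\<dots> = (- ln a) - (- ln 1)"
  proof (rule interval_integral_FTC_finite)
    show "continuous_on {min 1 a..max 1 a} (\<lambda>b. - (1 / b))"
      using a by (intro continuous_intros) auto
    fix x :: real
    assume x: "min 1 a \<le> x" "x \<le> max 1 a"
    then have xp: "0 < x" using a by auto
    have "((\<lambda>b. - ln b) has_real_derivative - (1 / x)) (at x)"
      using xp by (intro DERIV_minus DERIV_ln_divide)
    then show "((\<lambda>b. - ln b) has_vector_derivative - (1 / x)) (at x within {min 1 a..max 1 a})"
      by (simp add: has_real_derivative_iff_has_vector_derivative[symmetric] has_field_derivative_at_within)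
  qed
  finally show ?thesis using main unfolding h_def by simp
qed

theorem lemma4:
  fixes n :: nat and S :: real
  shows "integrable lborel (M_integrand n S) \<and>
    M_val n S = I_fun (S / sqrt (real n + 1)) - 1 / sqrt (2 * pi) * ln (1 + real n) \<and>
    (\<forall>x. I_fun x \<ge> 0) \<and>
    M_val n S \<ge> - (1 / sqrt (2 * pi)) * ln (1 + real n)"
proof -
  define a where "a = real n + 1"
  have a1: "1 \<le> a" and a0: "0 < a" unfolding a_def by auto
  define AF where "AF = (\<lambda>\<eta>. LBINT s=ereal 0..ereal S. sgn \<eta> * exp (\<eta> * s - a * \<eta>^2 / 2))"
  define BF where "BF = (\<lambda>\<eta>. LBINT b=ereal 1..ereal a. - (\<bar>\<eta>\<bar> * exp (- (b * \<eta>^2) / 2) / 2))"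
  have eq: "M_integrand n S = (\<lambda>\<eta>. AF \<eta> + BF \<eta>)"
  proof
    fix \<eta>
    show "M_integrand n S \<eta> = AF \<eta> + BF \<eta>"
      unfolding AF_def BF_def PA PB Psum a_def by simp
  qed
  note A = partA[OF a0, of S, folded AF_def]
  note B = partB[OF a1, folded BF_def]
  have int: "integrable lborel (M_integrand n S)"
    unfolding eq using A B by simp
  have "(\<integral>\<eta>. M_integrand n S \<eta> \<partial>lborel) = sqrt (2 * pi) * I_fun (S / sqrt a) - ln a"
    unfolding eq using A B by simp
  then have MV: "M_val n S = I_fun (S / sqrt (real n + 1)) - 1 / sqrt (2 * pi) * ln (1 + real n)"
    unfolding M_val_def a_def by (simp add: field_simps add.commute)
  have In: "\<forall>x. I_fun x \<ge> 0" using I_nonneg by blast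
  have "M_val n S \<ge> - (1 / sqrt (2 * pi)) * ln (1 + real n)"
    using MV I_nonneg[of "S / sqrt (real n + 1)"] by simp
  then show ?thesis using int MV In by blast
qed

end
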